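(* Let $I$ be a small directed category and let $A_I$ be the poset constructed from $I$ as described in the context. Then $A_I$ is a cofinite directed poset of infinite height.
   Context: Posets are categories with a unique morphism $u\to v$ iff $u\geq v$. A poset is cofinite if each $\{z\mid z\le x\}$ is finite; directed if nonempty with common upper bounds for pairs; of infinite height if each element has a strictly larger one. A subset $R$ of a poset $T$ is a section if $x\in R$, $y<x$ imply $y\in R$. For a category $\mathcal{R}$, $\mathcal{R}^{\lhd}$ is $\mathcal{R}$ with a new initial object $\infty$ adjoined. A category $I$ is directed if nonempty, any two objects admit an object mapping to both, and any parallel pair $f,g:s\to t$ is equalized by some $h:u\to s$. Construction: set $A_I^{-1}=\emptyset$ and $p^{-1}_I$ the empty functor. Given a poset $A_I^n$ and a functor $p_I^n:A_I^n\to I$, let $B_I^{n+1}$ be the set of pairs $(R,p)$ with $R$ a finite section of $A_I^n$ and $p:R^{\lhd}\to I$ a functor with $p|_R=p_I^n|_R$. Set $A_I^{n+1}=A_I^n\sqcup B_I^{n+1}$, with the order of $A_I^n$ extended by $c<(R,p)$ iff $c\in R$ (for $c\in A_I^n$), and $p_I^{n+1}$ extending $p_I^n$ with $p_I^{n+1}(R,p)=p(\infty)$ (on morphisms $(R,p)\to c$ it is $p(\infty\to c)$). Let $A_I=\bigcup_n A_I^n$ and $p_I:A_I\to I$ the union of the $p_I^n$. *)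

theory Defs
  imports Main "HOL-Library.FSet"
begin

definition category ::
  "'o set \<Rightarrow> ('o \<Rightarrow> 'o \<Rightarrow> 'm set) \<Rightarrow> ('m \<Rightarrow> 'm \<Rightarrow> 'm) \<Rightarrow> ('o \<Rightarrow> 'm) \<Rightarrow> bool" where
  "category Ob Hom cmp ident \<longleftrightarrow>
     (\<forall>a\<in>Ob. ident a \<in> Hom a a) \<and>
     (\<forall>a\<in>Ob. \<forall>b\<in>Ob. \<forall>c\<in>Ob. \<forall>f\<in>Hom a b. \<forall>g\<in>Hom b c. cmp g f \<in> Hom a c) \<and>
     (\<forall>a\<in>Ob. \<forall>b\<in>Ob. \<forall>f\<in>Hom a b. cmp (ident b) f = f \<and> cmp f (ident a) = f) \<and>
     (\<forall>a\<in>Ob. \<forall>b\<in>Ob. \<forall>c\<in>Ob. \<forall>d\<in>Ob. \<forall>f\<in>Hom a b. \<forall>g\<in>Hom b c. \<forall>h\<in>Hom c d.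
        cmp h (cmp g f) = cmp (cmp h g) f) \<and>
     (\<forall>a b. (a \<notin> Ob \<or> b \<notin> Ob) \<longrightarrow> Hom a b = {})"

definition directed_category ::
  "'o set \<Rightarrow> ('o \<Rightarrow> 'o \<Rightarrow> 'm set) \<Rightarrow> ('m \<Rightarrow> 'm \<Rightarrow> 'm) \<Rightarrow> bool" where
  "directed_category Ob Hom cmp \<longleftrightarrow>
     Ob \<noteq> {} \<and>
     (\<forall>s\<in>Ob. \<forall>t\<in>Ob. \<exists>u\<in>Ob. Hom u s \<noteq> {} \<and> Hom u t \<noteq> {}) \<and>
     (\<forall>s\<in>Ob. \<forall>t\<in>Ob. \<forall>f\<in>Hom s t. \<forall>g\<in>Hom s t.
        \<exists>u\<in>Ob. \<exists>h\<in>Hom u s. cmp f h = cmp g h)"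

text \<open>An element (R,p) of B^{k+1} is represented as ANode k x S, where k records the
  stage (making the union A^k \<sqcup> B^{k+1} disjoint), x = p(\<infinity>), and S is the finite
  graph of the cone c \<mapsto> p(\<infinity> \<rightarrow> c) on R; R = fst ` S. Since p|_R = p^k|_R is forced,
  this data determines the functor p.\<close>

datatype ('o, 'm) anode = ANode nat 'o "(('o, 'm) anode \<times> 'm) fset"

definition node_obj :: "('o, 'm) anode \<Rightarrow> 'o" where
  "node_obj y = (case y of ANode _ x _ \<Rightarrow> x)"

definition node_cone :: "('o, 'm) anode \<Rightarrow> (('o, 'm) anode \<times> 'm) set" where
  "node_cone y = (case y of ANode _ _ S \<Rightarrow> fset S)"

definition anode_less :: "('o, 'm) anode \<Rightarrow> ('o, 'm) anode \<Rightarrow> bool" where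
  "anode_less c y \<longleftrightarrow> c \<in> fst ` node_cone y"

definition anode_le :: "('o, 'm) anode \<Rightarrow> ('o, 'm) anode \<Rightarrow> bool" where
  "anode_le c y \<longleftrightarrow> c = y \<or> anode_less c y"

text \<open>p_I on the morphism y \<rightarrow> c (for c < y).\<close>
definition pmor :: "('o, 'm) anode \<Rightarrow> ('o, 'm) anode \<Rightarrow> 'm" where
  "pmor y c = (THE m. (c, m) \<in> node_cone y)"

definition is_section :: "('o, 'm) anode set \<Rightarrow> ('o, 'm) anode set \<Rightarrow> bool" where
  "is_section P R \<longleftrightarrow> R \<subseteq> P \<and> (\<forall>x\<in>R. \<forall>y\<in>P. anode_less y x \<longrightarrow> y \<in> R)"

definition Bnew ::
  "'o set \<Rightarrow> ('o \<Rightarrow> 'o \<Rightarrow> 'm set) \<Rightarrow> ('m \<Rightarrow> 'm \<Rightarrow> 'm) \<Rightarrow> ('o, 'm) anode set \<Rightarrow> nat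
     \<Rightarrow> ('o, 'm) anode set" where
  "Bnew Ob Hom cmp P k =
     {ANode k x S | x S.
        is_section P (fst ` fset S) \<and>
        (\<forall>c m m'. (c, m) \<in> fset S \<longrightarrow> (c, m') \<in> fset S \<longrightarrow> m = m') \<and>
        x \<in> Ob \<and>
        (\<forall>(c, m) \<in> fset S. m \<in> Hom x (node_obj c)) \<and>
        (\<forall>(c, m) \<in> fset S. \<forall>(d, m') \<in> fset S. anode_less d c \<longrightarrow> cmp (pmor c d) m = m')}"

text \<open>Alev 0 = A^{-1} = {}, Alev (Suc k) = A^k.\<close>
primrec Alev ::
  "'o set \<Rightarrow> ('o \<Rightarrow> 'o \<Rightarrow> 'm set) \<Rightarrow> ('m \<Rightarrow> 'm \<Rightarrow> 'm) \<Rightarrow> nat \<Rightarrow> ('o, 'm) anode set" where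
  "Alev Ob Hom cmp 0 = {}"
| "Alev Ob Hom cmp (Suc k) = Alev Ob Hom cmp k \<union> Bnew Ob Hom cmp (Alev Ob Hom cmp k) k"

definition A_I ::
  "'o set \<Rightarrow> ('o \<Rightarrow> 'o \<Rightarrow> 'm set) \<Rightarrow> ('m \<Rightarrow> 'm \<Rightarrow> 'm) \<Rightarrow> ('o, 'm) anode set" where
  "A_I Ob Hom cmp = (\<Union>k. Alev Ob Hom cmp k)"

definition is_poset :: "'a set \<Rightarrow> ('a \<Rightarrow> 'a \<Rightarrow> bool) \<Rightarrow> bool" where
  "is_poset A le \<longleftrightarrow> (\<forall>x\<in>A. le x x) \<and>
     (\<forall>x\<in>A. \<forall>y\<in>A. le x y \<longrightarrow> le y x \<longrightarrow> x = y) \<and>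
     (\<forall>x\<in>A. \<forall>y\<in>A. \<forall>z\<in>A. le x y \<longrightarrow> le y z \<longrightarrow> le x z)"

definition poset_cofinite :: "'a set \<Rightarrow> ('a \<Rightarrow> 'a \<Rightarrow> bool) \<Rightarrow> bool" where
  "poset_cofinite A le \<longleftrightarrow> (\<forall>x\<in>A. finite {z\<in>A. le z x})"

definition poset_directed :: "'a set \<Rightarrow> ('a \<Rightarrow> 'a \<Rightarrow> bool) \<Rightarrow> bool" where
  "poset_directed A le \<longleftrightarrow> A \<noteq> {} \<and> (\<forall>x\<in>A. \<forall>y\<in>A. \<exists>z\<in>A. le x z \<and> le y z)"

definition infinite_height :: "'a set \<Rightarrow> ('a \<Rightarrow> 'a \<Rightarrow> bool) \<Rightarrow> bool" where
  "infinite_height A le \<longleftrightarrow> (\<forall>x\<in>A. \<exists>y\<in>A. le x y \<and> x \<noteq> y)"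

end

theory Submission
  imports Defs
begin

definition node_idx :: "('o,'m) anode \<Rightarrow> nat" where
  "node_idx y = (case y of ANode k _ _ \<Rightarrow> k)"

lemma Alev_mono: "k \<le> l \<Longrightarrow> Alev Ob Hom cmp k \<subseteq> Alev Ob Hom cmp l"
  by (induction l) (auto simp: le_Suc_eq)

lemma Alev_Bnew: "x \<in> Alev Ob Hom cmp k \<Longrightarrow> \<exists>j<k. x \<in> Bnew Ob Hom cmp (Alev Ob Hom cmp j) j"
proof (induction k)
  case 0 then show ?case by simp
next
  case (Suc k) then show ?case using less_Suc_eq by auto
qed

lemma Bnew_props:
  assumes "x \<in> Bnew Ob Hom cmp P j"
  shows "node_idx x = j" "node_obj x \<in> Ob" "is_section P (fst ` node_cone x)"
    "finite (node_cone x)"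
    "\<And>c m m'. (c,m) \<in> node_cone x \<Longrightarrow> (c,m') \<in> node_cone x \<Longrightarrow> m = m'"
    "\<And>c m. (c,m) \<in> node_cone x \<Longrightarrow> m \<in> Hom (node_obj x) (node_obj c)"
    "\<And>c m d m'. (c,m) \<in> node_cone x \<Longrightarrow> (d,m') \<in> node_cone x \<Longrightarrow> anode_less d c \<Longrightarrow> cmp (pmor c d) m = m'"
  using assms apply (auto simp: Bnew_def node_idx_def node_obj_def node_cone_def)[6]
proof -
  fix c m d m' assume h: "(c,m) \<in> node_cone x" "(d,m') \<in> node_cone x" "anode_less d c"
  from assms obtain y S where xS: "x = ANode j y S" and
    H: "\<forall>(c, m) \<in> fset S. \<forall>(d, m') \<in> fset S. anode_less d c \<longrightarrow> cmp (pmor c d) m = m'"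
    unfolding Bnew_def by blast
  have "(c,m) \<in> fset S" "(d,m') \<in> fset S" using h(1,2) xS by (auto simp: node_cone_def)
  then show "cmp (pmor c d) m = m'" using H h(3) by fast
qed

lemma pmor_eq:
  assumes "x \<in> Bnew Ob Hom cmp P j" "(c,m) \<in> node_cone x"
  shows "pmor x c = m"
  unfolding pmor_def using assms Bnew_props(5)[OF assms(1)] by blast

lemma Bnew_cone:
  assumes "x \<in> Bnew Ob Hom cmp P j" "anode_less c x"
  shows "(c, pmor x c) \<in> node_cone x" "pmor x c \<in> Hom (node_obj x) (node_obj c)"
proof -
  obtain m where m: "(c,m) \<in> node_cone x" using assms(2) unfolding anode_less_def by force
  show "(c, pmor x c) \<in> node_cone x" using m pmor_eq[OF assms(1) m] by simp
  then show "pmor x c \<in> Hom (node_obj x) (node_obj c)" using Bnew_props(6)[OF assms(1)] by blast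
qed

lemma Bnew_compat:
  assumes "x \<in> Bnew Ob Hom cmp P j" "anode_less c x" "anode_less d x" "anode_less d c"
  shows "cmp (pmor c d) (pmor x c) = pmor x d"
  using Bnew_props(7)[OF assms(1) Bnew_cone(1)[OF assms(1,2)] Bnew_cone(1)[OF assms(1,3)] assms(4)] .

lemma Bnew_sub:
  assumes "x \<in> Bnew Ob Hom cmp P j" "anode_less c x"
  shows "c \<in> P"
  using Bnew_props(3)[OF assms(1)] assms(2) unfolding is_section_def anode_less_def by blast

lemma below_in:
  assumes "c \<in> Alev Ob Hom cmp k" "anode_less d c"
  shows "d \<in> Alev Ob Hom cmp k"
proof -
  obtain j where j: "j < k" "c \<in> Bnew Ob Hom cmp (Alev Ob Hom cmp j) j"
    using Alev_Bnew[OF assms(1)] by blast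
  then show ?thesis using Bnew_sub[OF j(2) assms(2)] Alev_mono[of j k] by auto
qed

lemma trans_less:
  assumes "x \<in> Alev Ob Hom cmp K" "anode_less c x" "anode_less d c"
  shows "anode_less d x"
proof -
  obtain j where j: "j < K" "x \<in> Bnew Ob Hom cmp (Alev Ob Hom cmp j) j"
    using Alev_Bnew[OF assms(1)] by blast
  have c: "c \<in> Alev Ob Hom cmp j" using Bnew_sub[OF j(2) assms(2)] .
  have d: "d \<in> Alev Ob Hom cmp j" using below_in[OF c assms(3)] .
  show ?thesis using Bnew_props(3)[OF j(2)] assms(2,3) d unfolding is_section_def anode_less_def
    by blast
qed

lemma idx_less:
  assumes "x \<in> Alev Ob Hom cmp K" "anode_less c x"
  shows "node_idx c < node_idx x"
proof -
  obtain j where j: "j < K" "x \<in> Bnew Ob Hom cmp (Alev Ob Hom cmp j) j"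
    using Alev_Bnew[OF assms(1)] by blast
  have c: "c \<in> Alev Ob Hom cmp j" using Bnew_sub[OF j(2) assms(2)] .
  obtain i where "i < j" "c \<in> Bnew Ob Hom cmp (Alev Ob Hom cmp i) i"
    using Alev_Bnew[OF c] by blast
  then show ?thesis using Bnew_props(1) j(2) by metis
qed

lemma mk_node:
  assumes "is_section P (fset Rf)" "u \<in> Ob" "\<forall>c\<in>fset Rf. \<mu> c \<in> Hom u (node_obj c)"
    "\<forall>c\<in>fset Rf. \<forall>d\<in>fset Rf. anode_less d c \<longrightarrow> cmp (pmor c d) (\<mu> c) = \<mu> d"
  shows "ANode K u ((\<lambda>c. (c, \<mu> c)) |`| Rf) \<in> Bnew Ob Hom cmp P K"
    "anode_less c (ANode K u ((\<lambda>c. (c, \<mu> c)) |`| Rf)) \<longleftrightarrow> c \<in> fset Rf"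
proof -
  have im: "fst ` fset ((\<lambda>c. (c, \<mu> c)) |`| Rf) = fset Rf" by (force simp: image_image)
  show "ANode K u ((\<lambda>c. (c, \<mu> c)) |`| Rf) \<in> Bnew Ob Hom cmp P K"
    unfolding Bnew_def using assms im by auto
  show "anode_less c (ANode K u ((\<lambda>c. (c, \<mu> c)) |`| Rf)) \<longleftrightarrow> c \<in> fset Rf"
    unfolding anode_less_def node_cone_def using im by simp
qed

lemma A_I_iff: "x \<in> A_I Ob Hom cmp \<longleftrightarrow> (\<exists>k. x \<in> Alev Ob Hom cmp k)"
  unfolding A_I_def by blast



lemma catD:
  assumes "category Ob Hom cmp ident"
  shows "\<And>a. a \<in> Ob \<Longrightarrow> ident a \<in> Hom a a"
    "\<And>a b c f g. f \<in> Hom a b \<Longrightarrow> g \<in> Hom b c \<Longrightarrow> cmp g f \<in> Hom a c"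
    "\<And>a b f. f \<in> Hom a b \<Longrightarrow> cmp (ident b) f = f \<and> cmp f (ident a) = f"
    "\<And>a b c d f g h. f \<in> Hom a b \<Longrightarrow> g \<in> Hom b c \<Longrightarrow> h \<in> Hom c d \<Longrightarrow>
        cmp h (cmp g f) = cmp (cmp h g) f"
    "\<And>a b f. f \<in> Hom a b \<Longrightarrow> a \<in> Ob \<and> b \<in> Ob"
proof -
  from assms[unfolded category_def] have
    C1: "\<forall>a\<in>Ob. ident a \<in> Hom a a" and
    C2: "\<forall>a\<in>Ob. \<forall>b\<in>Ob. \<forall>c\<in>Ob. \<forall>f\<in>Hom a b. \<forall>g\<in>Hom b c. cmp g f \<in> Hom a c" and
    C3: "\<forall>a\<in>Ob. \<forall>b\<in>Ob. \<forall>f\<in>Hom a b. cmp (ident b) f = f \<and> cmp f (ident a) = f" and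
    C4: "\<forall>a\<in>Ob. \<forall>b\<in>Ob. \<forall>c\<in>Ob. \<forall>d\<in>Ob. \<forall>f\<in>Hom a b. \<forall>g\<in>Hom b c. \<forall>h\<in>Hom c d.
        cmp h (cmp g f) = cmp (cmp h g) f" and
    C5: "\<forall>a b. (a \<notin> Ob \<or> b \<notin> Ob) \<longrightarrow> Hom a b = {}"
    by - (elim conjE; assumption)+
  have ob: "\<And>a b f. f \<in> Hom a b \<Longrightarrow> a \<in> Ob \<and> b \<in> Ob"
  proof -
    fix a b f assume "f \<in> Hom a b"
    then have "Hom a b \<noteq> {}" by blast
    then show "a \<in> Ob \<and> b \<in> Ob" using C5 by blast
  qed
  show "\<And>a b f. f \<in> Hom a b \<Longrightarrow> a \<in> Ob \<and> b \<in> Ob" by (rule ob)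
  show "\<And>a. a \<in> Ob \<Longrightarrow> ident a \<in> Hom a a" using C1 by blast
  show "\<And>a b c f g. f \<in> Hom a b \<Longrightarrow> g \<in> Hom b c \<Longrightarrow> cmp g f \<in> Hom a c"
  proof -
    fix a b c f g assume h: "f \<in> Hom a b" "g \<in> Hom b c"
    then have o: "a \<in> Ob" "b \<in> Ob" "c \<in> Ob" using ob by blast+
    show "cmp g f \<in> Hom a c" by (rule C2[rule_format, OF o h])
  qed
  show "\<And>a b f. f \<in> Hom a b \<Longrightarrow> cmp (ident b) f = f \<and> cmp f (ident a) = f"
  proof -
    fix a b f assume h: "f \<in> Hom a b"
    then have o: "a \<in> Ob" "b \<in> Ob" using ob by blast+
    show "cmp (ident b) f = f \<and> cmp f (ident a) = f" by (rule C3[rule_format, OF o h])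
  qed
  show "\<And>a b c d f g h. f \<in> Hom a b \<Longrightarrow> g \<in> Hom b c \<Longrightarrow> h \<in> Hom c d \<Longrightarrow>
        cmp h (cmp g f) = cmp (cmp h g) f"
  proof -
    fix a b c d f g h assume h: "f \<in> Hom a b" "g \<in> Hom b c" "h \<in> Hom c d"
    then have o: "a \<in> Ob" "b \<in> Ob" "c \<in> Ob" "d \<in> Ob" using ob by blast+
    show "cmp h (cmp g f) = cmp (cmp h g) f" by (rule C4[rule_format, OF o h])
  qed
qed

lemma equalize:
  assumes cat: "category Ob Hom cmp ident" and dir: "directed_category Ob Hom cmp"
  shows "finite C \<Longrightarrow> u \<in> Ob \<Longrightarrow> (\<forall>c\<in>C. \<alpha> c \<in> Hom u (ob c) \<and> \<beta> c \<in> Hom u (ob c)) \<Longrightarrow>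
     \<exists>v\<in>Ob. \<exists>h\<in>Hom v u. \<forall>c\<in>C. cmp (\<alpha> c) h = cmp (\<beta> c) h"
proof (induction C rule: finite_induct)
  case empty
  then show ?case using catD[OF cat] by blast
next
  case (insert c C)
  from insert obtain v1 h1 where v1: "v1 \<in> Ob" "h1 \<in> Hom v1 u"
    "\<forall>d\<in>C. cmp (\<alpha> d) h1 = cmp (\<beta> d) h1" by auto
  have ac: "\<alpha> c \<in> Hom u (ob c)" "\<beta> c \<in> Hom u (ob c)" using insert(5) by auto
  have oc: "ob c \<in> Ob" using ac catD(5)[OF cat] by blast
  have a1: "cmp (\<alpha> c) h1 \<in> Hom v1 (ob c)" "cmp (\<beta> c) h1 \<in> Hom v1 (ob c)"
    using ac v1(2) catD(2)[OF cat] by blast+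
  then obtain v2 h2 where v2: "v2 \<in> Ob" "h2 \<in> Hom v2 v1"
    "cmp (cmp (\<alpha> c) h1) h2 = cmp (cmp (\<beta> c) h1) h2"
    using dir v1(1) oc unfolding directed_category_def by meson
  have h: "cmp h1 h2 \<in> Hom v2 u" using v1 v2 catD(2)[OF cat] by blast
  have "\<forall>d\<in>insert c C. cmp (\<alpha> d) (cmp h1 h2) = cmp (\<beta> d) (cmp h1 h2)"
  proof
    fix d assume d: "d \<in> insert c C"
    have ad: "\<alpha> d \<in> Hom u (ob d)" "\<beta> d \<in> Hom u (ob d)" using insert(5) d by auto
    have e1: "cmp (\<alpha> d) (cmp h1 h2) = cmp (cmp (\<alpha> d) h1) h2"
      by (rule catD(4)[OF cat v2(2) v1(2) ad(1)])
    have e2: "cmp (\<beta> d) (cmp h1 h2) = cmp (cmp (\<beta> d) h1) h2"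
      by (rule catD(4)[OF cat v2(2) v1(2) ad(2)])
    show "cmp (\<alpha> d) (cmp h1 h2) = cmp (\<beta> d) (cmp h1 h2)"
      using d e1 e2 v1(3) v2(3) by auto
  qed
  then show ?case using v2(1) h by blast
qed

lemma AL_props:
  assumes "x \<in> Alev Ob Hom cmp K"
  shows "node_obj x \<in> Ob" "finite (node_cone x)"
    "\<And>c. anode_less c x \<Longrightarrow> pmor x c \<in> Hom (node_obj x) (node_obj c)"
    "\<And>c. anode_less c x \<Longrightarrow> c \<in> Alev Ob Hom cmp K"
    "\<And>c d. anode_less c x \<Longrightarrow> anode_less d c \<Longrightarrow> cmp (pmor c d) (pmor x c) = pmor x d"
    "\<not> anode_less x x"
proof -
  obtain j where j: "j < K" "x \<in> Bnew Ob Hom cmp (Alev Ob Hom cmp j) j"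
    using Alev_Bnew[OF assms(1)] by blast
  show "node_obj x \<in> Ob" "finite (node_cone x)" using Bnew_props[OF j(2)] by auto
  show "\<And>c. anode_less c x \<Longrightarrow> pmor x c \<in> Hom (node_obj x) (node_obj c)"
    using Bnew_cone(2)[OF j(2)] .
  show "\<And>c. anode_less c x \<Longrightarrow> c \<in> Alev Ob Hom cmp K" using below_in[OF assms] .
  show "\<And>c d. anode_less c x \<Longrightarrow> anode_less d c \<Longrightarrow> cmp (pmor c d) (pmor x c) = pmor x d"
    using Bnew_compat[OF j(2)] trans_less[OF assms] by blast
  show "\<not> anode_less x x" using idx_less[OF assms] by blast
qed

lemma fset_of: "finite A \<Longrightarrow> \<exists>F. fset F = A"
  by (rule exI[of _ "Abs_fset A"]) (simp add: Abs_fset_inverse)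

lemma part_poset: "is_poset (A_I Ob Hom cmp) anode_le"
  unfolding is_poset_def
proof (intro conjI ballI impI)
  fix x assume "x \<in> A_I Ob Hom cmp" then show "anode_le x x" by (simp add: anode_le_def)
next
  fix x y assume xy: "x \<in> A_I Ob Hom cmp" "y \<in> A_I Ob Hom cmp" "anode_le x y" "anode_le y x"
  show "x = y"
  proof (rule ccontr)
    assume "x \<noteq> y"
    then have "anode_less x y" "anode_less y x" using xy unfolding anode_le_def by auto
    then show False using idx_less xy(1,2) unfolding A_I_iff by (metis less_asym)
  qed
next
  fix x y z assume xy: "x \<in> A_I Ob Hom cmp" "y \<in> A_I Ob Hom cmp" "z \<in> A_I Ob Hom cmp"
    "anode_le x y" "anode_le y z"
  then obtain K where "z \<in> Alev Ob Hom cmp K" unfolding A_I_iff by blast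
  then show "anode_le x z" using xy(4,5) trans_less unfolding anode_le_def by metis
qed

lemma part_cofinite: "poset_cofinite (A_I Ob Hom cmp) anode_le"
  unfolding poset_cofinite_def
proof
  fix x assume "x \<in> A_I Ob Hom cmp"
  then obtain K where K: "x \<in> Alev Ob Hom cmp K" unfolding A_I_iff by blast
  have "{z \<in> A_I Ob Hom cmp. anode_le z x} \<subseteq> insert x (fst ` node_cone x)"
    unfolding anode_le_def anode_less_def by auto
  moreover have "finite (insert x (fst ` node_cone x))" using AL_props(2)[OF K] by simp
  ultimately show "finite {z \<in> A_I Ob Hom cmp. anode_le z x}" by (rule finite_subset)
qed

lemma part_height:
  assumes cat: "category Ob Hom cmp ident"
  shows "infinite_height (A_I Ob Hom cmp) anode_le"
  unfolding infinite_height_def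
proof
  fix x assume "x \<in> A_I Ob Hom cmp"
  then obtain K where K: "x \<in> Alev Ob Hom cmp K" unfolding A_I_iff by blast
  note P = AL_props[OF K]
  from fset_of[OF finite_imageI[OF P(2)]] obtain F where F: "fset F = fst ` node_cone x" ..
  define Rf where "Rf = finsert x F"
  define t where "t = node_obj x"
  define \<mu> where "\<mu> c = (if c = x then ident t else pmor x c)" for c
  have Rf: "c \<in> fset Rf \<longleftrightarrow> c = x \<or> anode_less c x" for c
    unfolding Rf_def anode_less_def using F by auto
  have sec: "is_section (Alev Ob Hom cmp K) (fset Rf)"
    unfolding is_section_def
  proof (intro conjI ballI impI)
    show "fset Rf \<subseteq> Alev Ob Hom cmp K"
    proof
      fix c assume "c \<in> fset Rf"
      then have "c = x \<or> anode_less c x" using Rf by simp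
      then show "c \<in> Alev Ob Hom cmp K" using K P(4) by metis
    qed
  next
    fix z w assume zw: "z \<in> fset Rf" "w \<in> Alev Ob Hom cmp K" "anode_less w z"
    then have "z = x \<or> anode_less z x" using Rf by simp
    then have "anode_less w x" using zw(3) trans_less[OF K] by metis
    then show "w \<in> fset Rf" using Rf by simp
  qed
  have hom: "\<forall>c\<in>fset Rf. \<mu> c \<in> Hom t (node_obj c)"
    using Rf P(3) catD(1)[OF cat] P(1) unfolding \<mu>_def t_def by auto
  have comp: "\<forall>c\<in>fset Rf. \<forall>d\<in>fset Rf. anode_less d c \<longrightarrow> cmp (pmor c d) (\<mu> c) = \<mu> d"
  proof (intro ballI impI)
    fix c d assume cd: "c \<in> fset Rf" "d \<in> fset Rf" "anode_less d c"
    show "cmp (pmor c d) (\<mu> c) = \<mu> d"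
    proof (cases "c = x")
      case True
      then have "d \<noteq> x" using cd P(6) by blast
      then show ?thesis using True cd catD(3)[OF cat P(3)] Rf unfolding \<mu>_def t_def by auto
    next
      case False
      then have c: "anode_less c x" using cd Rf by blast
      then have d: "anode_less d x" using trans_less[OF K] cd(3) by blast
      then have "d \<noteq> x" using P(6) by blast
      then show ?thesis using False P(5)[OF c cd(3)] unfolding \<mu>_def by auto
    qed
  qed
  have t: "t \<in> Ob" using P(1) t_def by simp
  define y where "y = ANode K t ((\<lambda>c. (c, \<mu> c)) |`| Rf)"
  have yB: "y \<in> Bnew Ob Hom cmp (Alev Ob Hom cmp K) K"
    using mk_node(1)[where \<mu>=\<mu> and Hom=Hom and cmp=cmp and Ob=Ob, OF sec t hom comp] y_def by simp
  then have yA: "y \<in> Alev Ob Hom cmp (Suc K)" by simp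
  have xy: "anode_less x y" using mk_node(2)[where \<mu>=\<mu> and Hom=Hom and cmp=cmp and Ob=Ob, OF sec t hom comp] Rf y_def by simp
  have ne: "x \<noteq> y"
  proof
    assume "x = y"
    then show False using xy AL_props(6)[OF yA] by simp
  qed
  have yI: "y \<in> A_I Ob Hom cmp" using yA unfolding A_I_iff by (rule exI)
  have "anode_le x y" using xy unfolding anode_le_def by simp
  then show "\<exists>y\<in>A_I Ob Hom cmp. anode_le x y \<and> x \<noteq> y"
    using ne yI by (intro bexI[of _ y]) simp_all
qed

lemma part_directed:
  assumes cat: "category Ob Hom cmp ident" and dir: "directed_category Ob Hom cmp"
  shows "poset_directed (A_I Ob Hom cmp) anode_le"
  unfolding poset_directed_def
proof (intro conjI ballI)
  obtain t where t: "t \<in> Ob" using dir unfolding directed_category_def by blast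
  have "is_section {} (fset {||})" unfolding is_section_def by simp
  then have "ANode 0 t ((\<lambda>c. (c, undefined)) |`| {||}) \<in> Bnew Ob Hom cmp {} 0"
    using mk_node(1)[of "{}" "{||}" t Ob "\<lambda>c. undefined"] t by simp
  then have "ANode 0 t ((\<lambda>c. (c, undefined)) |`| {||}) \<in> Alev Ob Hom cmp (Suc 0)"
    by (simp only: Alev.simps Un_iff) simp
  then have "ANode 0 t ((\<lambda>c. (c, undefined)) |`| {||}) \<in> A_I Ob Hom cmp"
    unfolding A_I_iff by (rule exI)
  then show "A_I Ob Hom cmp \<noteq> {}" by (metis empty_iff)
next
  fix x y assume "x \<in> A_I Ob Hom cmp" "y \<in> A_I Ob Hom cmp"
  then obtain k1 k2 where "x \<in> Alev Ob Hom cmp k1" "y \<in> Alev Ob Hom cmp k2"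
    unfolding A_I_iff by blast
  then have Kx: "x \<in> Alev Ob Hom cmp (max k1 k2)" and Ky: "y \<in> Alev Ob Hom cmp (max k1 k2)"
    using Alev_mono[of k1 "max k1 k2" Ob Hom cmp] Alev_mono[of k2 "max k1 k2" Ob Hom cmp] by auto
  define K where "K = max k1 k2"
  note Kx = Kx[folded K_def] and Ky = Ky[folded K_def]
  have inA: "z \<in> Alev Ob Hom cmp K \<Longrightarrow> z \<in> A_I Ob Hom cmp" for z unfolding A_I_iff by blast
  show "\<exists>z\<in>A_I Ob Hom cmp. anode_le x z \<and> anode_le y z"
  proof (cases "x = y \<or> anode_less x y \<or> anode_less y x")
    case True
    then show ?thesis using inA Kx Ky unfolding anode_le_def by blast
  next
    case False
    then have ne: "x \<noteq> y" "\<not> anode_less x y" "\<not> anode_less y x" by auto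
    note Px = AL_props[OF Kx] and Py = AL_props[OF Ky]
    define tx where "tx = node_obj x"
    define ty where "ty = node_obj y"
    obtain w f0 g0 where w: "w \<in> Ob" "f0 \<in> Hom w tx" "g0 \<in> Hom w ty"
      using dir Px(1) Py(1) unfolding directed_category_def tx_def ty_def by blast
    define C where "C = fst ` node_cone x \<inter> fst ` node_cone y"
    have finC: "finite C" unfolding C_def using Px(2) by simp
    have Cin: "c \<in> C \<longleftrightarrow> anode_less c x \<and> anode_less c y" for c
      unfolding C_def anode_less_def by simp
    have ab: "\<forall>c\<in>C. cmp (pmor x c) f0 \<in> Hom w (node_obj c) \<and> cmp (pmor y c) g0 \<in> Hom w (node_obj c)"
      using Cin Px(3) Py(3) w catD(2)[OF cat] unfolding tx_def ty_def by blast
    obtain v h where vh: "v \<in> Ob" "h \<in> Hom v w"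
      "\<forall>c\<in>C. cmp (cmp (pmor x c) f0) h = cmp (cmp (pmor y c) g0) h"
      using equalize[OF cat dir finC w(1) ab] by blast
    define f' where "f' = cmp f0 h"
    define g' where "g' = cmp g0 h"
    have f': "f' \<in> Hom v tx" and g': "g' \<in> Hom v ty"
      unfolding f'_def g'_def using vh w catD(2)[OF cat] by blast+
    have eqC: "cmp (pmor x c) f' = cmp (pmor y c) g'" if "anode_less c x" "anode_less c y" for c
    proof -
      have "cmp (pmor x c) f' = cmp (cmp (pmor x c) f0) h"
        unfolding f'_def using catD(4)[OF cat vh(2) w(2) Px(3)[OF that(1), folded tx_def]] .
      also have "\<dots> = cmp (cmp (pmor y c) g0) h" using vh(3) Cin that by blast
      also have "\<dots> = cmp (pmor y c) g'"
        unfolding g'_def using catD(4)[OF cat vh(2) w(3) Py(3)[OF that(2), folded ty_def]] by simp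
      finally show ?thesis .
    qed
    from fset_of[OF finite_imageI[OF Px(2)]] obtain Fx where Fx: "fset Fx = fst ` node_cone x" ..
    from fset_of[OF finite_imageI[OF Py(2)]] obtain Fy where Fy: "fset Fy = fst ` node_cone y" ..
    define Rf where "Rf = finsert x (finsert y (Fx |\<union>| Fy))"
    have Rf: "c \<in> fset Rf \<longleftrightarrow> c = x \<or> c = y \<or> anode_less c x \<or> anode_less c y" for c
      unfolding Rf_def anode_less_def using Fx Fy by auto
    define \<mu> where "\<mu> c = (if c = x then f' else if c = y then g' else
        if anode_less c x then cmp (pmor x c) f' else cmp (pmor y c) g')" for c
    have mx: "\<mu> d = cmp (pmor x d) f'" if "anode_less d x" for d
    proof -
      have "d \<noteq> x" using that Px(6) by blast
      moreover have "d \<noteq> y" using that ne by blast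
      ultimately show ?thesis unfolding \<mu>_def using that by simp
    qed
    have my: "\<mu> d = cmp (pmor y d) g'" if "anode_less d y" for d
    proof -
      have "d \<noteq> y" using that Py(6) by blast
      moreover have "d \<noteq> x" using that ne by blast
      ultimately show ?thesis unfolding \<mu>_def using that eqC by simp
    qed
    have sec: "is_section (Alev Ob Hom cmp K) (fset Rf)"
      unfolding is_section_def
    proof (intro conjI ballI impI)
      show "fset Rf \<subseteq> Alev Ob Hom cmp K"
      proof
        fix c assume "c \<in> fset Rf"
        then have "c = x \<or> c = y \<or> anode_less c x \<or> anode_less c y" using Rf by simp
        then show "c \<in> Alev Ob Hom cmp K" using Kx Ky Px(4) Py(4) by metis
      qed
    next
      fix z u assume zu: "z \<in> fset Rf" "u \<in> Alev Ob Hom cmp K" "anode_less u z"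
      then have "z = x \<or> z = y \<or> anode_less z x \<or> anode_less z y" using Rf by simp
      then have "anode_less u x \<or> anode_less u y"
        using zu(3) trans_less[OF Kx] trans_less[OF Ky] by metis
      then show "u \<in> fset Rf" using Rf by simp
    qed
    have hom: "\<forall>c\<in>fset Rf. \<mu> c \<in> Hom v (node_obj c)"
    proof
      fix c assume c: "c \<in> fset Rf"
      show "\<mu> c \<in> Hom v (node_obj c)"
      proof (cases "c = x")
        case True then show ?thesis using f' unfolding \<mu>_def tx_def by simp
      next
        case F1: False
        show ?thesis
        proof (cases "c = y")
          case True then show ?thesis using f' g' F1 unfolding \<mu>_def ty_def by simp
        next
          case False
          then have "anode_less c x \<or> anode_less c y" using F1 c Rf by blast
          then show ?thesis using mx my Px(3) Py(3) f' g' catD(2)[OF cat]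
            unfolding tx_def ty_def by metis
        qed
      qed
    qed
    have comp: "\<forall>c\<in>fset Rf. \<forall>d\<in>fset Rf. anode_less d c \<longrightarrow> cmp (pmor c d) (\<mu> c) = \<mu> d"
    proof (intro ballI impI)
      fix c d assume cd: "c \<in> fset Rf" "d \<in> fset Rf" "anode_less d c"
      show "cmp (pmor c d) (\<mu> c) = \<mu> d"
      proof (cases "c = x")
        case True
        then show ?thesis using mx cd(3) unfolding \<mu>_def by simp
      next
        case F1: False
        show ?thesis
        proof (cases "c = y")
          case True
          then show ?thesis using my cd(3) F1 unfolding \<mu>_def by simp
        next
          case False
          then have "anode_less c x \<or> anode_less c y" using F1 cd Rf by blast
          then show ?thesis
          proof
            assume c: "anode_less c x"
            have d: "anode_less d x" using trans_less[OF Kx c cd(3)] .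
            have cK: "c \<in> Alev Ob Hom cmp K" using Px(4)[OF c] .
            have "cmp (pmor c d) (\<mu> c) = cmp (pmor c d) (cmp (pmor x c) f')" using mx[OF c] by simp
            also have "\<dots> = cmp (cmp (pmor c d) (pmor x c)) f'"
              using catD(4)[OF cat f' Px(3)[OF c, folded tx_def] AL_props(3)[OF cK cd(3)]] .
            also have "\<dots> = cmp (pmor x d) f'" using Px(5)[OF c cd(3)] by simp
            also have "\<dots> = \<mu> d" using mx[OF d] by simp
            finally show ?thesis .
          next
            assume c: "anode_less c y"
            have d: "anode_less d y" using trans_less[OF Ky c cd(3)] .
            have cK: "c \<in> Alev Ob Hom cmp K" using Py(4)[OF c] .
            have "cmp (pmor c d) (\<mu> c) = cmp (pmor c d) (cmp (pmor y c) g')" using my[OF c] by simp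
            also have "\<dots> = cmp (cmp (pmor c d) (pmor y c)) g'"
              using catD(4)[OF cat g' Py(3)[OF c, folded ty_def] AL_props(3)[OF cK cd(3)]] .
            also have "\<dots> = cmp (pmor y d) g'" using Py(5)[OF c cd(3)] by simp
            also have "\<dots> = \<mu> d" using my[OF d] by simp
            finally show ?thesis .
          qed
        qed
      qed
    qed
    define z where "z = ANode K v ((\<lambda>c. (c, \<mu> c)) |`| Rf)"
    have "z \<in> Bnew Ob Hom cmp (Alev Ob Hom cmp K) K"
      using mk_node(1)[where \<mu>=\<mu> and Hom=Hom and cmp=cmp and Ob=Ob, OF sec vh(1) hom comp] z_def by simp
    then have zA: "z \<in> Alev Ob Hom cmp (Suc K)" by simp
    have "anode_less x z" "anode_less y z"
      using mk_node(2)[where \<mu>=\<mu> and Hom=Hom and cmp=cmp and Ob=Ob, OF sec vh(1) hom comp] Rf z_def by simp_all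
    moreover have "z \<in> A_I Ob Hom cmp" using zA unfolding A_I_iff by (rule exI)
    ultimately show ?thesis unfolding anode_le_def by (intro bexI[of _ z]) simp_all
  qed
qed

theorem lemma3p9:
  fixes Ob :: "'o set" and Hom :: "'o \<Rightarrow> 'o \<Rightarrow> 'm set"
    and cmp :: "'m \<Rightarrow> 'm \<Rightarrow> 'm" and ident :: "'o \<Rightarrow> 'm"
  assumes "category Ob Hom cmp ident"
    and "directed_category Ob Hom cmp"
  shows "is_poset (A_I Ob Hom cmp) anode_le \<and>
         poset_cofinite (A_I Ob Hom cmp) anode_le \<and>
         poset_directed (A_I Ob Hom cmp) anode_le \<and>
         infinite_height (A_I Ob Hom cmp) anode_le"
  using part_poset part_cofinite part_directed[OF assms] part_height[OF assms(1)] by blast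

end
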